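(* Let $\mathbf f$ be an AHK model for a relational signature $S$, let $n\geq1$ and $\omega\in\Omega^{(n)}$ with $p:=\mathbf f\downarrow[n](\omega)>0$. Let $O\subseteq\Omega^{(n+1)}$ be the set of $(n+1)$-worlds $\omega'$ with $\omega'\downarrow[n]=\omega$ and $\omega'\downarrow(1,\dots,n-1,n+1)=\omega$. Then $\mathbf f\downarrow[n+1](O)\geq p^2$.
   Context: A relational signature $S$ is a finite set of relation symbols; $a=\mathrm{arity}(S)\geq1$ is the maximal arity. An $n$-world has domain $[n]$ and, for each $m$-ary $r\in S$, an adjacency array $A_r:[n]^m\to\{0,1\}$; $\Omega^{(n)}$ is the set of $n$-worlds. $\omega'\downarrow[n]$ is the restriction of $\omega'$ to $[n]$; for a tuple $\mathbf i=(i_1,\dots,i_m)$ of distinct elements, $\omega'\downarrow\mathbf i$ is the sub-world induced by $\{i_1,\dots,i_m\}$ relabeled via $i_h\mapsto h$. $\langle\mathbb N\rangle^m$ denotes strictly increasing $m$-tuples of naturals. For an $m$-world $\omega$, $D_m(\omega)$ is the collection of restrictions of $A_r(\omega)$ ($r\in S$ of arity $\geq m$) to argument tuples with exactly $m$ distinct elements; $\mathcal T_m$ is its set of possible values, on which permutations of $[m]$ act by relabeling. AHK model: i.i.d. uniform $[0,1]$ variables $U_{\mathbf i}$, $\mathbf i\in\langle\mathbb N\rangle^m$, $m=0,\dots,a$ (including $U_\emptyset$), and measurable functions $f^m:[0,1]^{2^m}\to\mathcal T_m$ ($m=1,\dots,a$); for $\mathbf i\in\langle\mathbb N\rangle^m$,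 $D_{\mathbf i}=f^m(\mathbf U_{\mathbf i})$ where $\mathbf U_{\mathbf i}$ lists all $U_{\mathbf i'}$, $\mathbf i'\subseteq\mathbf i$, in lexicographic order. Each $f^m$ is permutation equivariant: $f^m(\pi\mathbf x)=\pi f^m(\mathbf x)$ for every permutation $\pi$ of $[m]$, where $\pi$ acts on $[0,1]^{2^m}$ (coordinates indexed by subsets of $[m]$) by placing in the position of subset $I$ the coordinate of subset $\pi I$. The $D_{\mathbf i}$ determine a random world on $\mathbb N$ whose sub-world on $\mathbf i$ has arity-$m$ data $D_{\mathbf i}$; $\mathbf f\downarrow[n]$ is the distribution of its restriction to $[n]$. *)

theory Defs
  imports "HOL-Probability.Probability" "HOL-Combinatorics.Permutations"
begin

text \<open>A world on [n] = {1..n} is encoded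
  by its adjacency data: w r xs is A_r(xs) for r \<in> S and argument tuples xs (lists of
  length ar r with entries in [n]); it is False on every other input.\<close>

type_synonym 'r world = "'r \<Rightarrow> nat list \<Rightarrow> bool"

definition signature :: "'r set \<Rightarrow> ('r \<Rightarrow> nat) \<Rightarrow> bool" where
  "signature S ar \<longleftrightarrow> finite S \<and> S \<noteq> {} \<and> (\<forall>r\<in>S. 1 \<le> ar r)"

definition arity_max :: "'r set \<Rightarrow> ('r \<Rightarrow> nat) \<Rightarrow> nat" where
  "arity_max S ar = Max (ar ` S)"

definition is_world :: "'r set \<Rightarrow> ('r \<Rightarrow> nat) \<Rightarrow> nat \<Rightarrow> 'r world \<Rightarrow> bool" where
  "is_world S ar n w \<longleftrightarrow>
     (\<forall>r xs. w r xs \<longrightarrow> r \<in> S \<and> length xs = ar r \<and> set xs \<subseteq> {1..n})"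

definition worlds :: "'r set \<Rightarrow> ('r \<Rightarrow> nat) \<Rightarrow> nat \<Rightarrow> 'r world set" where
  "worlds S ar n = {w. is_world S ar n w}"

definition restr_world :: "nat \<Rightarrow> 'r world \<Rightarrow> 'r world" where
  "restr_world n w = (\<lambda>r xs. set xs \<subseteq> {1..n} \<and> w r xs)"

definition sub_world :: "nat list \<Rightarrow> 'r world \<Rightarrow> 'r world" where
  "sub_world is w = (\<lambda>r xs. set xs \<subseteq> {1..length is} \<and> w r (map (\<lambda>h. is ! (h - 1)) xs))"

text \<open>T_m: possible values of the arity-m data D_m(w) of an m-world, i.e. the
  restrictions of A_r (r \<in> S) to argument tuples using exactly the m elements of [m]
  (encoded as functions that are False outside this domain).\<close>
definition data_space :: "'r set \<Rightarrow> ('r \<Rightarrow> nat) \<Rightarrow> nat \<Rightarrow> 'r world set" where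
  "data_space S ar m =
     {D. \<forall>r xs. D r xs \<longrightarrow> r \<in> S \<and> length xs = ar r \<and> set xs = {1..m}}"

definition perm_data :: "(nat \<Rightarrow> nat) \<Rightarrow> 'r world \<Rightarrow> 'r world" where
  "perm_data \<pi> D = (\<lambda>r xs. D r (map \<pi> xs))"

definition perm_input :: "nat \<Rightarrow> (nat \<Rightarrow> nat) \<Rightarrow> (nat set \<Rightarrow> real) \<Rightarrow> (nat set \<Rightarrow> real)" where
  "perm_input m \<pi> x = (\<lambda>I\<in>Pow {1..m}. x (\<pi> ` I))"

definition unit_interval :: "real measure" where
  "unit_interval = restrict_space lborel {0..1}"

definition cube :: "nat \<Rightarrow> (nat set \<Rightarrow> real) measure" where
  "cube m = PiM (Pow {1..m}) (\<lambda>_. unit_interval)"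

definition AHK_model ::
  "'r set \<Rightarrow> ('r \<Rightarrow> nat) \<Rightarrow> (nat \<Rightarrow> (nat set \<Rightarrow> real) \<Rightarrow> 'r world) \<Rightarrow> bool" where
  "AHK_model S ar f \<longleftrightarrow> signature S ar \<and>
     (\<forall>m\<in>{1..arity_max S ar}.
        f m \<in> cube m \<rightarrow>\<^sub>M count_space (data_space S ar m) \<and>
        (\<forall>\<pi> x. \<pi> permutes {1..m} \<longrightarrow> x \<in> space (cube m) \<longrightarrow>
           f m (perm_input m \<pi> x) = perm_data \<pi> (f m x)))"

definition U_space :: "nat \<Rightarrow> (nat set \<Rightarrow> real) measure" where
  "U_space a = PiM {A. finite A \<and> card A \<le> a} (\<lambda>_. unit_interval)"

text \<open>Rank (1-based position) of x in the finite set E.\<close>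
definition rank :: "nat set \<Rightarrow> nat \<Rightarrow> nat" where
  "rank E x = card {y\<in>E. y \<le> x}"

definition block_data ::
  "(nat \<Rightarrow> (nat set \<Rightarrow> real) \<Rightarrow> 'r world) \<Rightarrow> (nat set \<Rightarrow> real) \<Rightarrow> nat set \<Rightarrow> 'r world" where
  "block_data f U E =
     (let m = card E; L = sorted_list_of_set E
      in f m (\<lambda>I\<in>Pow {1..m}. U ((\<lambda>h. L ! (h - 1)) ` I)))"

text \<open>The random world on \<nat> determined by the D_i: A_r(xs) is read off from the data of
  the set of distinct entries of xs, after relabelling.\<close>
definition ahk_world ::
  "'r set \<Rightarrow> ('r \<Rightarrow> nat) \<Rightarrow> (nat \<Rightarrow> (nat set \<Rightarrow> real) \<Rightarrow> 'r world) \<Rightarrow> (nat set \<Rightarrow> real) \<Rightarrow> 'r world" where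
  "ahk_world S ar f U = (\<lambda>r xs. r \<in> S \<and> length xs = ar r \<and>
       block_data f U (set xs) r (map (rank (set xs)) xs))"

definition ahk_dist ::
  "'r set \<Rightarrow> ('r \<Rightarrow> nat) \<Rightarrow> (nat \<Rightarrow> (nat set \<Rightarrow> real) \<Rightarrow> 'r world) \<Rightarrow> nat \<Rightarrow> 'r world measure" where
  "ahk_dist S ar f n = distr (U_space (arity_max S ar)) (count_space (worlds S ar n))
      (\<lambda>U. restr_world n (ahk_world S ar f U))"

end

theory Submission
  imports Defs
begin


lemma abstract_ineq:
  fixes P :: "'a measure" and I K0 K1 K2 :: "'i set" and \<sigma> :: "'i \<Rightarrow> 'i"
    and g :: "('i \<Rightarrow> 'a) \<Rightarrow> bool"
  assumes P: "prob_space P"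
    and sub: "K0 \<union> K1 \<union> K2 \<subseteq> I"
    and fin: "finite K0" "finite K1" "finite K2"
    and dis: "K0 \<inter> K1 = {}" "K0 \<inter> K2 = {}" "K1 \<inter> K2 = {}"
    and sK0: "\<And>i. i \<in> K0 \<Longrightarrow> \<sigma> i = i"
    and sK1: "bij_betw \<sigma> K1 K2"
    and g[measurable]: "g \<in> PiM (K0 \<union> K1) (\<lambda>_. P) \<rightarrow>\<^sub>M count_space UNIV"
  shows "(measure (PiM I (\<lambda>_. P)) {x \<in> space (PiM I (\<lambda>_. P)). g (restrict x (K0 \<union> K1))})\<^sup>2
     \<le> measure (PiM I (\<lambda>_. P)) {x \<in> space (PiM I (\<lambda>_. P)). g (restrict x (K0 \<union> K1)) \<and> g (\<lambda>i\<in>K0 \<union> K1. x (\<sigma> i))}"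
proof -
  define Q where "Q = PiM I (\<lambda>_. P)"
  define L where "L = K1 \<union> K2"
  define F where "F = K0 \<union> L"
  interpret PP: prob_space P by (rule P)
  interpret PS: product_sigma_finite "\<lambda>_. P"
    by (simp add: product_sigma_finite_def PP.sigma_finite_measure_axioms)
  have pQ: "prob_space Q" unfolding Q_def by (rule prob_space_PiM) (simp add: P)
  have pPi: "prob_space (PiM K (\<lambda>_. P))" for K :: "'i set" by (rule prob_space_PiM) (simp add: P)
  have finF: "finite F" "finite L" using fin by (auto simp: F_def L_def)
  have disF: "K0 \<inter> L = {}" using dis by (auto simp: L_def)
  have FI: "F \<subseteq> I" using sub by (auto simp: F_def L_def)
  have sK1': "\<sigma> i \<in> K2" if "i \<in> K1" for i using sK1 that by (auto simp: bij_betw_def)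
  have sF: "\<sigma> i \<in> F" if "i \<in> K0 \<union> K1" for i using that sK0 sK1' by (auto simp: F_def L_def)
  have distrF: "distr Q (PiM F (\<lambda>_. P)) (\<lambda>x. restrict x F) = PiM F (\<lambda>_. P)"
    using distr_PiM_reindex[of I "\<lambda>_. P" "\<lambda>x. x" F] P FI unfolding Q_def
    by (auto simp: restrict_def)
  have distrK: "distr (PiM K2 (\<lambda>_. P)) (PiM K1 (\<lambda>_. P)) (\<lambda>c. \<lambda>i\<in>K1. c (\<sigma> i)) = PiM K1 (\<lambda>_. P)"
    using distr_PiM_reindex[of K2 "\<lambda>_. P" \<sigma> K1] P sK1 sK1' by (auto simp: bij_betw_def)
  have m1[measurable]: "(\<lambda>y. restrict y (K0 \<union> K1)) \<in> PiM F (\<lambda>_. P) \<rightarrow>\<^sub>M PiM (K0 \<union> K1) (\<lambda>_. P)"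
    by (rule measurable_restrict_subset) (auto simp: F_def L_def)
  have m2[measurable]: "(\<lambda>y. \<lambda>i\<in>K0 \<union> K1. y (\<sigma> i)) \<in> PiM F (\<lambda>_. P) \<rightarrow>\<^sub>M PiM (K0 \<union> K1) (\<lambda>_. P)"
    by (rule measurable_restrict) (auto intro!: measurable_component_singleton sF)
  have m3[measurable]: "(\<lambda>c. \<lambda>i\<in>K1. c (\<sigma> i)) \<in> PiM K2 (\<lambda>_. P) \<rightarrow>\<^sub>M PiM K1 (\<lambda>_. P)"
    by (rule measurable_restrict) (auto intro!: measurable_component_singleton sK1')
  define A1 where "A1 = {y \<in> space (PiM F (\<lambda>_. P)). g (restrict y (K0 \<union> K1))}"
  define A12 where "A12 = {y \<in> space (PiM F (\<lambda>_. P)). g (restrict y (K0 \<union> K1)) \<and> g (\<lambda>i\<in>K0 \<union> K1. y (\<sigma> i))}"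
  have A1m[measurable]: "A1 \<in> sets (PiM F (\<lambda>_. P))" unfolding A1_def by measurable
  have A12m[measurable]: "A12 \<in> sets (PiM F (\<lambda>_. P))" unfolding A12_def by measurable
  have rr: "restrict (restrict x F) (K0 \<union> K1) = restrict x (K0 \<union> K1)" for x :: "'i \<Rightarrow> 'a"
    by (auto simp: restrict_def fun_eq_iff F_def L_def)
  have rs: "(\<lambda>i\<in>K0 \<union> K1. restrict x F (\<sigma> i)) = (\<lambda>i\<in>K0 \<union> K1. x (\<sigma> i))" for x :: "'i \<Rightarrow> 'a"
    using sF by (auto simp: fun_eq_iff)
  have rsp: "restrict x F \<in> space (PiM F (\<lambda>_. P))" if "x \<in> space Q" for x
    using that FI by (auto simp: Q_def space_PiM)
  have E1: "{x \<in> space Q. g (restrict x (K0 \<union> K1))} = (\<lambda>x. restrict x F) -` A1 \<inter> space Q"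
    unfolding A1_def using rsp rr by auto
  have E12: "{x \<in> space Q. g (restrict x (K0 \<union> K1)) \<and> g (\<lambda>i\<in>K0 \<union> K1. x (\<sigma> i))} = (\<lambda>x. restrict x F) -` A12 \<inter> space Q"
    unfolding A12_def using rsp rr rs by auto
  have mF: "(\<lambda>x. restrict x F) \<in> Q \<rightarrow>\<^sub>M PiM F (\<lambda>_. P)"
    unfolding Q_def by (rule measurable_restrict_subset[OF FI])
  have eE1: "emeasure Q {x \<in> space Q. g (restrict x (K0 \<union> K1))} = emeasure (PiM F (\<lambda>_. P)) A1"
    unfolding E1 by (subst distrF[symmetric]) (simp add: emeasure_distr mF)
  have eE12: "emeasure Q {x \<in> space Q. g (restrict x (K0 \<union> K1)) \<and> g (\<lambda>i\<in>K0 \<union> K1. x (\<sigma> i))} = emeasure (PiM F (\<lambda>_. P)) A12"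
    unfolding E12 by (subst distrF[symmetric]) (simp add: emeasure_distr mF)
  define B1 where "B1 = {y \<in> space (PiM (K0 \<union> K1) (\<lambda>_. P)). g y}"
  have B1m[measurable]: "B1 \<in> sets (PiM (K0 \<union> K1) (\<lambda>_. P))" unfolding B1_def by measurable
  define h where "h a b = (indicator B1 (merge K0 K1 (a, b)) :: ennreal)" for a b
  have hm[measurable]: "(\<lambda>(a,b). h a b) \<in> borel_measurable (PiM K0 (\<lambda>_. P) \<Otimes>\<^sub>M PiM K1 (\<lambda>_. P))"
    unfolding h_def by measurable
  define \<phi> where "\<phi> a = (\<integral>\<^sup>+ b. h a b \<partial>PiM K1 (\<lambda>_. P))" for a
  have hm1[measurable]: "h a \<in> borel_measurable (PiM K1 (\<lambda>_. P))" if "a \<in> space (PiM K0 (\<lambda>_. P))" for a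
    using that unfolding h_def by measurable
  have \<phi>m[measurable]: "\<phi> \<in> borel_measurable (PiM K0 (\<lambda>_. P))"
  proof -
    interpret K1P: prob_space "PiM K1 (\<lambda>_. P)" by (rule pPi)
    show ?thesis unfolding \<phi>_def using hm by measurable
  qed
  have merge_sp: "merge K0 K1 (a, b) \<in> space (PiM (K0 \<union> K1) (\<lambda>_. P))"
    if "a \<in> space (PiM K0 (\<lambda>_. P))" "b \<in> space (PiM K1 (\<lambda>_. P))" for a b
    using that by (auto simp: space_PiM PiE_def Pi_def merge_def extensional_def)
  have key: "restrict (merge K0 L (a, merge K1 K2 (b, c))) (K0 \<union> K1) = merge K0 K1 (a, b)"
    "(\<lambda>i\<in>K0 \<union> K1. merge K0 L (a, merge K1 K2 (b, c)) (\<sigma> i)) = merge K0 K1 (a, \<lambda>i\<in>K1. c (\<sigma> i))"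
    "merge K0 L (a, merge K1 K2 (b, c)) \<in> space (PiM F (\<lambda>_. P))"
    if "a \<in> space (PiM K0 (\<lambda>_. P))" "b \<in> space (PiM K1 (\<lambda>_. P))" "c \<in> space (PiM K2 (\<lambda>_. P))" for a b c
  proof -
    show "restrict (merge K0 L (a, merge K1 K2 (b, c))) (K0 \<union> K1) = merge K0 K1 (a, b)"
      using dis by (auto simp: fun_eq_iff merge_def L_def)
    show "(\<lambda>i\<in>K0 \<union> K1. merge K0 L (a, merge K1 K2 (b, c)) (\<sigma> i)) = merge K0 K1 (a, \<lambda>i\<in>K1. c (\<sigma> i))"
      using dis sK0 sK1' by (auto simp: fun_eq_iff merge_def L_def)
    show "merge K0 L (a, merge K1 K2 (b, c)) \<in> space (PiM F (\<lambda>_. P))"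
      using that by (auto simp: space_PiM PiE_def Pi_def merge_def extensional_def F_def L_def)
  qed
  have FL: "F = K0 \<union> L" by (simp add: F_def)
  have ind1: "indicator A1 (merge K0 L (a, merge K1 K2 (b, c))) = h a b"
    if "a \<in> space (PiM K0 (\<lambda>_. P))" "b \<in> space (PiM K1 (\<lambda>_. P))" "c \<in> space (PiM K2 (\<lambda>_. P))" for a b c
    using key[OF that] merge_sp[OF that(1,2)] by (simp add: A1_def B1_def h_def indicator_def)
  have ind12: "indicator A12 (merge K0 L (a, merge K1 K2 (b, c))) = h a b * h a (\<lambda>i\<in>K1. c (\<sigma> i))"
    if "a \<in> space (PiM K0 (\<lambda>_. P))" "b \<in> space (PiM K1 (\<lambda>_. P))" "c \<in> space (PiM K2 (\<lambda>_. P))" for a b c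
  proof -
    have "(\<lambda>i\<in>K1. c (\<sigma> i)) \<in> space (PiM K1 (\<lambda>_. P))"
      using measurable_space[OF m3 that(3)] .
    then have "merge K0 K1 (a, \<lambda>i\<in>K1. c (\<sigma> i)) \<in> space (PiM (K0 \<union> K1) (\<lambda>_. P))"
      by (rule merge_sp[OF that(1)])
    then show ?thesis
      using key[OF that] merge_sp[OF that(1,2)]
      by (simp add: A12_def B1_def h_def indicator_def)
  qed
  have split: "emeasure (PiM F (\<lambda>_. P)) A = (\<integral>\<^sup>+ a. (\<integral>\<^sup>+ b. (\<integral>\<^sup>+ c. indicator A (merge K0 L (a, merge K1 K2 (b, c))) \<partial>PiM K2 (\<lambda>_. P)) \<partial>PiM K1 (\<lambda>_. P)) \<partial>PiM K0 (\<lambda>_. P))"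
    if "A \<in> sets (PiM F (\<lambda>_. P))" for A
  proof -
    have [measurable]: "A \<in> sets (PiM (K0 \<union> L) (\<lambda>_. P))" "A \<in> sets (PiM (K0 \<union> (K1 \<union> K2)) (\<lambda>_. P))"
      using that by (simp_all add: FL L_def)
    have "emeasure (PiM F (\<lambda>_. P)) A = (\<integral>\<^sup>+ y. indicator A y \<partial>PiM F (\<lambda>_. P))"
      using that by simp
    also have "\<dots> = (\<integral>\<^sup>+ a. (\<integral>\<^sup>+ z. indicator A (merge K0 L (a, z)) \<partial>PiM L (\<lambda>_. P)) \<partial>PiM K0 (\<lambda>_. P))"
      unfolding FL by (rule PS.product_nn_integral_fold[OF disF fin(1) finF(2)]) measurable
    also have "\<dots> = (\<integral>\<^sup>+ a. (\<integral>\<^sup>+ b. (\<integral>\<^sup>+ c. indicator A (merge K0 L (a, merge K1 K2 (b, c))) \<partial>PiM K2 (\<lambda>_. P)) \<partial>PiM K1 (\<lambda>_. P)) \<partial>PiM K0 (\<lambda>_. P))"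
    proof (rule nn_integral_cong)
      fix a assume a: "a \<in> space (PiM K0 (\<lambda>_. P))"
      show "(\<integral>\<^sup>+ z. indicator A (merge K0 L (a, z)) \<partial>PiM L (\<lambda>_. P)) = (\<integral>\<^sup>+ b. (\<integral>\<^sup>+ c. indicator A (merge K0 L (a, merge K1 K2 (b, c))) \<partial>PiM K2 (\<lambda>_. P)) \<partial>PiM K1 (\<lambda>_. P))"
        unfolding L_def
        by (rule PS.product_nn_integral_fold[OF dis(3) fin(2,3)]) (use a in measurable)
    qed
    finally show ?thesis .
  qed
  have e1: "emeasure (PiM F (\<lambda>_. P)) A1 = (\<integral>\<^sup>+ a. \<phi> a \<partial>PiM K0 (\<lambda>_. P))"
    unfolding split[OF A1m]
  proof (intro nn_integral_cong)
    fix a assume a: "a \<in> space (PiM K0 (\<lambda>_. P))"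
    show "(\<integral>\<^sup>+ b. (\<integral>\<^sup>+ c. indicator A1 (merge K0 L (a, merge K1 K2 (b, c))) \<partial>PiM K2 (\<lambda>_. P)) \<partial>PiM K1 (\<lambda>_. P)) = \<phi> a"
      unfolding \<phi>_def
    proof (intro nn_integral_cong)
      fix b assume b: "b \<in> space (PiM K1 (\<lambda>_. P))"
      interpret K2P: prob_space "PiM K2 (\<lambda>_. P)" by (rule pPi)
      have "(\<integral>\<^sup>+ c. indicator A1 (merge K0 L (a, merge K1 K2 (b, c))) \<partial>PiM K2 (\<lambda>_. P))
          = (\<integral>\<^sup>+ c. h a b \<partial>PiM K2 (\<lambda>_. P))"
        by (intro nn_integral_cong) (simp add: ind1 a b)
      also have "\<dots> = h a b" by (simp add: K2P.emeasure_space_1)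
      finally show "(\<integral>\<^sup>+ c. indicator A1 (merge K0 L (a, merge K1 K2 (b, c))) \<partial>PiM K2 (\<lambda>_. P)) = h a b" .
    qed
  qed
  have e12: "emeasure (PiM F (\<lambda>_. P)) A12 = (\<integral>\<^sup>+ a. \<phi> a * \<phi> a \<partial>PiM K0 (\<lambda>_. P))"
    unfolding split[OF A12m]
  proof (intro nn_integral_cong)
    fix a assume a: "a \<in> space (PiM K0 (\<lambda>_. P))"
    have ha: "(\<integral>\<^sup>+ c. h a (\<lambda>i\<in>K1. c (\<sigma> i)) \<partial>PiM K2 (\<lambda>_. P)) = \<phi> a"
    proof -
      have "(\<integral>\<^sup>+ c. h a (\<lambda>i\<in>K1. c (\<sigma> i)) \<partial>PiM K2 (\<lambda>_. P))
          = (\<integral>\<^sup>+ b. h a b \<partial>distr (PiM K2 (\<lambda>_. P)) (PiM K1 (\<lambda>_. P)) (\<lambda>c. \<lambda>i\<in>K1. c (\<sigma> i)))"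
        by (rule nn_integral_distr[symmetric]) (use a in measurable)
      then show ?thesis unfolding distrK \<phi>_def .
    qed
    have "(\<integral>\<^sup>+ b. (\<integral>\<^sup>+ c. indicator A12 (merge K0 L (a, merge K1 K2 (b, c))) \<partial>PiM K2 (\<lambda>_. P)) \<partial>PiM K1 (\<lambda>_. P))
       = (\<integral>\<^sup>+ b. h a b * \<phi> a \<partial>PiM K1 (\<lambda>_. P))"
    proof (intro nn_integral_cong)
      fix b assume b: "b \<in> space (PiM K1 (\<lambda>_. P))"
      have "(\<integral>\<^sup>+ c. indicator A12 (merge K0 L (a, merge K1 K2 (b, c))) \<partial>PiM K2 (\<lambda>_. P))
          = (\<integral>\<^sup>+ c. h a b * h a (\<lambda>i\<in>K1. c (\<sigma> i)) \<partial>PiM K2 (\<lambda>_. P))"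
        by (intro nn_integral_cong) (simp add: ind12 a b)
      also have "\<dots> = h a b * \<phi> a"
        by (subst nn_integral_cmult) (use a ha in measurable, simp add: ha)
      finally show "(\<integral>\<^sup>+ c. indicator A12 (merge K0 L (a, merge K1 K2 (b, c))) \<partial>PiM K2 (\<lambda>_. P)) = h a b * \<phi> a" .
    qed
    also have "\<dots> = \<phi> a * \<phi> a"
      unfolding \<phi>_def by (rule nn_integral_multc) (use a in measurable)
    finally show "(\<integral>\<^sup>+ b. (\<integral>\<^sup>+ c. indicator A12 (merge K0 L (a, merge K1 K2 (b, c))) \<partial>PiM K2 (\<lambda>_. P)) \<partial>PiM K1 (\<lambda>_. P)) = \<phi> a * \<phi> a" .
  qed
  interpret K0P: prob_space "PiM K0 (\<lambda>_. P)" by (rule pPi)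
  have CS: "(\<integral>\<^sup>+ a. \<phi> a * 1 \<partial>PiM K0 (\<lambda>_. P))\<^sup>2 \<le> (\<integral>\<^sup>+ a. \<phi> a ^ 2 \<partial>PiM K0 (\<lambda>_. P)) * (\<integral>\<^sup>+ a. 1 ^ 2 \<partial>PiM K0 (\<lambda>_. P))"
    by (rule Cauchy_Schwarz_nn_integral) measurable
  then have CS': "(\<integral>\<^sup>+ a. \<phi> a \<partial>PiM K0 (\<lambda>_. P))\<^sup>2 \<le> (\<integral>\<^sup>+ a. \<phi> a * \<phi> a \<partial>PiM K0 (\<lambda>_. P))"
    by (simp add: K0P.emeasure_space_1 power2_eq_square)
  interpret QP: prob_space Q by (rule pQ)
  have fin12: "emeasure Q {x \<in> space Q. g (restrict x (K0 \<union> K1)) \<and> g (\<lambda>i\<in>K0 \<union> K1. x (\<sigma> i))} < top"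
    by (simp add: less_top[symmetric])
  have "(measure Q {x \<in> space Q. g (restrict x (K0 \<union> K1))})\<^sup>2
      = enn2real ((emeasure Q {x \<in> space Q. g (restrict x (K0 \<union> K1))})\<^sup>2)"
    by (simp add: measure_def power2_eq_square enn2real_mult)
  also have "\<dots> \<le> enn2real (emeasure Q {x \<in> space Q. g (restrict x (K0 \<union> K1)) \<and> g (\<lambda>i\<in>K0 \<union> K1. x (\<sigma> i))})"
    by (rule enn2real_mono[OF _ fin12]) (simp only: eE1 eE12 e1 e12 CS')
  also have "\<dots> = measure Q {x \<in> space Q. g (restrict x (K0 \<union> K1)) \<and> g (\<lambda>i\<in>K0 \<union> K1. x (\<sigma> i))}"
    by (simp add: measure_def)
  finally show ?thesis unfolding Q_def .
qed


lemma block_data_cong: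
  assumes "finite E" "\<And>A. A \<subseteq> E \<Longrightarrow> U A = U' A"
  shows "block_data f U E = block_data f U' E"
proof -
  define L where "L = sorted_list_of_set E"
  have "(\<lambda>h. L ! (h - 1)) ` I \<subseteq> E" if "I \<subseteq> {1..card E}" for I
  proof
    fix y assume "y \<in> (\<lambda>h. L ! (h - 1)) ` I"
    then obtain h where h: "h \<in> I" "y = L ! (h - 1)" by auto
    have "h \<in> {1..card E}" using that h by auto
    then have "h - 1 < length L" using assms(1) by (auto simp: L_def)
    then show "y \<in> E" using h assms(1) nth_mem[of "h - 1" L] by (auto simp: L_def)
  qed
  then show ?thesis
    unfolding block_data_def Let_def L_def[symmetric]
    by (intro arg_cong[where f="f (card E)"]) (auto simp: fun_eq_iff assms(2))
qed

lemma ahk_world_cong: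
  assumes "r \<in> S \<Longrightarrow> length xs = ar r \<Longrightarrow> (\<forall>A. A \<subseteq> set xs \<longrightarrow> U A = U' A)"
  shows "ahk_world S ar f U r xs = ahk_world S ar f U' r xs"
  unfolding ahk_world_def using assms block_data_cong[of "set xs" U U' f] by auto

lemma sorted_image_mono:
  assumes "strict_mono_on D \<tau>" "E \<subseteq> D" "finite E"
  shows "sorted_list_of_set (\<tau> ` E) = map \<tau> (sorted_list_of_set E)"
proof -
  define L where "L = sorted_list_of_set E"
  have sL: "sorted_wrt (<) L" "set L = E" "length L = card E"
    using assms(3) by (auto simp: L_def)
  have inj: "inj_on \<tau> E" using assms(1,2) strict_mono_on_imp_inj_on inj_on_subset by blast
  have "sorted_wrt (<) (map \<tau> L)"
    unfolding sorted_wrt_map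
    by (rule sorted_wrt_mono_rel[OF _ sL(1)]) (use assms(1,2) sL(2) in \<open>auto simp: strict_mono_on_def\<close>)
  moreover have "set (map \<tau> L) = \<tau> ` E" using sL by simp
  moreover have "length (map \<tau> L) = card (\<tau> ` E)" using sL card_image[OF inj] by simp
  ultimately show ?thesis unfolding L_def
    using sorted_list_of_set_unique[of "\<tau> ` E" "map \<tau> L"] assms(3) L_def by auto
qed

lemma rank_mono:
  assumes "strict_mono_on D \<tau>" "E \<subseteq> D" "x \<in> E" "finite E"
  shows "rank (\<tau> ` E) (\<tau> x) = rank E x"
proof -
  have inj: "inj_on \<tau> E" using assms(1,2) strict_mono_on_imp_inj_on inj_on_subset by blast
  have le: "\<tau> y \<le> \<tau> x \<longleftrightarrow> y \<le> x" if "y \<in> E" for y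
    using assms that by (metis linorder_not_le strict_mono_on_leD strict_mono_onD subsetD)
  have "{z \<in> \<tau> ` E. z \<le> \<tau> x} = \<tau> ` {y \<in> E. y \<le> x}" using le by auto
  then show ?thesis unfolding rank_def
    by (simp add: card_image inj_on_subset[OF inj])
qed

lemma ahk_world_relabel:
  assumes mono: "strict_mono_on D \<tau>" and xsD: "set xs \<subseteq> D"
    and UU: "r \<in> S \<Longrightarrow> length xs = ar r \<Longrightarrow> (\<forall>A. A \<subseteq> set xs \<longrightarrow> U' A = U (\<tau> ` A))"
  shows "ahk_world S ar f U r (map \<tau> xs) = ahk_world S ar f U' r xs"
proof (cases "r \<in> S \<and> length xs = ar r")
  case False
  then show ?thesis by (auto simp: ahk_world_def)
next
  case True
  define E where "E = set xs"
  define L where "L = sorted_list_of_set E"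
  have finE: "finite E" by (simp add: E_def)
  have inj: "inj_on \<tau> E" using mono xsD strict_mono_on_imp_inj_on inj_on_subset E_def by blast
  have UU': "U' A = U (\<tau> ` A)" if "A \<subseteq> E" for A using UU True that E_def by auto
  have rk: "map (rank (\<tau> ` E)) (map \<tau> xs) = map (rank E) xs"
    using rank_mono[OF mono] xsD finE by (auto simp: E_def)
  have sl: "sorted_list_of_set (\<tau> ` E) = map \<tau> L"
    unfolding L_def using sorted_image_mono[OF mono] xsD finE E_def by auto
  have cd: "card (\<tau> ` E) = card E" using card_image[OF inj] .
  have sub: "(\<lambda>h. L ! (h - 1)) ` I \<subseteq> E" if "I \<subseteq> {1..card E}" for I
  proof
    fix y assume "y \<in> (\<lambda>h. L ! (h - 1)) ` I"
    then obtain h where h: "h \<in> I" "y = L ! (h - 1)" by auto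
    have "h \<in> {1..card E}" using that h by auto
    then have "h - 1 < length L" using finE by (auto simp: L_def)
    then show "y \<in> E" using h finE nth_mem[of "h - 1" L] by (auto simp: L_def)
  qed
  have img: "(\<lambda>h. map \<tau> L ! (h - 1)) ` I = \<tau> ` ((\<lambda>h. L ! (h - 1)) ` I)" if "I \<subseteq> {1..card E}" for I
  proof -
    have "map \<tau> L ! (h - 1) = \<tau> (L ! (h - 1))" if "h \<in> I" for h
    proof -
      have "h \<in> {1..card E}" using \<open>I \<subseteq> {1..card E}\<close> that by auto
      then have "h - 1 < length L" using finE by (auto simp: L_def)
      then show ?thesis by simp
    qed
    then show ?thesis by (auto simp: image_image)
  qed
  have eqI: "U ((\<lambda>h. map \<tau> L ! (h - 1)) ` I) = U' ((\<lambda>h. L ! (h - 1)) ` I)"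
    if "I \<subseteq> {1..card E}" for I
    using img[OF that] UU'[OF sub[OF that]] by simp
  have bd: "block_data f U (\<tau> ` E) = block_data f U' E"
    unfolding block_data_def Let_def sl cd L_def[symmetric]
    by (intro arg_cong[where f="f (card E)"] restrict_ext eqI) simp
  show ?thesis
    unfolding ahk_world_def using True bd rk by (simp add: E_def del: map_map)
qed



lemma ar_le_max:
  assumes "signature S ar" "r \<in> S" shows "ar r \<le> arity_max S ar"
  using assms unfolding signature_def arity_max_def by (auto intro: Max_ge)

lemma ahk_world_meas:
  assumes AHK: "AHK_model S ar f"
    and KS: "{A. A \<subseteq> {1..N} \<and> card A \<le> arity_max S ar} \<subseteq> K"
    and xs: "set xs \<subseteq> {1..N}"
  shows "(\<lambda>U. ahk_world S ar f U r xs) \<in> PiM K (\<lambda>_. unit_interval) \<rightarrow>\<^sub>M count_space UNIV"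
proof (cases "r \<in> S \<and> length xs = ar r")
  case False
  then have "(\<lambda>U. ahk_world S ar f U r xs) = (\<lambda>_. False)" by (auto simp: ahk_world_def fun_eq_iff)
  then show ?thesis by (simp only:) (rule measurable_const, simp)
next
  case True
  define E where "E = set xs"
  define m where "m = card E"
  define L where "L = sorted_list_of_set E"
  define ys where "ys = map (rank E) xs"
  have sig: "signature S ar" using AHK by (simp add: AHK_model_def)
  have a: "ar r \<le> arity_max S ar" using ar_le_max[OF sig] True by simp
  have "1 \<le> ar r" using sig True by (simp add: signature_def)
  then have "xs \<noteq> []" using True by auto
  then have m1: "1 \<le> m" by (simp add: m_def E_def card_gt_0_iff Suc_le_eq)
  have ma: "m \<le> arity_max S ar" using card_length[of xs] True a by (simp add: m_def E_def)
  have fm: "f m \<in> cube m \<rightarrow>\<^sub>M count_space (data_space S ar m)"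
    using AHK m1 ma by (simp add: AHK_model_def)
  have sub: "(\<lambda>h. L ! (h - 1)) ` I \<subseteq> E" if "I \<subseteq> {1..m}" for I
  proof
    fix y assume "y \<in> (\<lambda>h. L ! (h - 1)) ` I"
    then obtain h where h: "h \<in> I" "y = L ! (h - 1)" by auto
    have "h \<in> {1..m}" using that h by auto
    then have "h - 1 < length L" by (auto simp: L_def m_def)
    then show "y \<in> E" using h nth_mem[of "h - 1" L] by (auto simp: L_def E_def)
  qed
  have inK: "(\<lambda>h. L ! (h - 1)) ` I \<in> K" if "I \<subseteq> {1..m}" for I
  proof -
    have "card ((\<lambda>h. L ! (h - 1)) ` I) \<le> card E" using sub[OF that] by (intro card_mono) (auto simp: E_def)
    then have "(\<lambda>h. L ! (h - 1)) ` I \<in> {A. A \<subseteq> {1..N} \<and> card A \<le> arity_max S ar}"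
      using sub[OF that] xs ma by (auto simp: E_def m_def)
    then show ?thesis using KS by blast
  qed
  have \<Phi>: "(\<lambda>U. \<lambda>I\<in>Pow {1..m}. U ((\<lambda>h. L ! (h - 1)) ` I)) \<in> PiM K (\<lambda>_. unit_interval) \<rightarrow>\<^sub>M cube m"
    unfolding cube_def
    by (rule measurable_restrict, rule measurable_component_singleton, rule inK) auto
  have eq: "(\<lambda>U. ahk_world S ar f U r xs) = (\<lambda>D. D r ys) \<circ> f m \<circ> (\<lambda>U. \<lambda>I\<in>Pow {1..m}. U ((\<lambda>h. L ! (h - 1)) ` I))"
    using True by (auto simp: ahk_world_def block_data_def Let_def E_def m_def L_def ys_def fun_eq_iff)
  show ?thesis unfolding eq
    by (rule measurable_comp[OF \<Phi> measurable_comp[OF fm measurable_count_space]])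
qed

lemma triples_finite:
  assumes "signature S ar"
  shows "finite {(r, xs). r \<in> S \<and> set xs \<subseteq> {1..(N::nat)} \<and> length xs = ar r}"
proof -
  have "{(r, xs). r \<in> S \<and> set xs \<subseteq> {1..N} \<and> length xs = ar r}
      \<subseteq> S \<times> {xs. set xs \<subseteq> {1..N} \<and> length xs \<le> arity_max S ar}"
    using ar_le_max[OF assms] by auto
  moreover have "finite (S \<times> {xs. set xs \<subseteq> {1..N} \<and> length xs \<le> arity_max S ar})"
    using assms by (intro finite_cartesian_product finite_lists_length_le) (auto simp: signature_def)
  ultimately show ?thesis by (rule finite_subset)
qed

lemma worlds_finite:
  assumes "signature S ar"
  shows "finite (worlds S ar N)"
proof -
  define T where "T = {(r, xs). r \<in> S \<and> set xs \<subseteq> {1..N} \<and> length xs = ar r}"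
  have "worlds S ar N \<subseteq> (\<lambda>P. \<lambda>r xs. (r, xs) \<in> P) ` Pow T"
  proof
    fix w assume w: "w \<in> worlds S ar N"
    have "w = (\<lambda>r xs. (r, xs) \<in> {t \<in> T. w (fst t) (snd t)})"
      using w by (auto simp: worlds_def is_world_def T_def fun_eq_iff)
    then show "w \<in> (\<lambda>P. \<lambda>r xs. (r, xs) \<in> P) ` Pow T" by blast
  qed
  moreover have "finite T" unfolding T_def by (rule triples_finite[OF assms])
  ultimately show ?thesis by (meson finite_Pow_iff finite_imageI finite_subset)
qed

lemma restr_meas:
  assumes AHK: "AHK_model S ar f"
    and KS: "{A. A \<subseteq> {1..N} \<and> card A \<le> arity_max S ar} \<subseteq> K"
  shows "(\<lambda>U. restr_world N (ahk_world S ar f U)) \<in> PiM K (\<lambda>_. unit_interval) \<rightarrow>\<^sub>M count_space (worlds S ar N)"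
proof -
  have sig: "signature S ar" using AHK by (simp add: AHK_model_def)
  define T where "T = {(r, xs). r \<in> S \<and> set xs \<subseteq> {1..N} \<and> length xs = ar r}"
  have finT: "finite T" unfolding T_def by (rule triples_finite[OF sig])
  let ?M = "PiM K (\<lambda>_. unit_interval)"
  have into: "(\<lambda>U. restr_world N (ahk_world S ar f U)) \<in> space ?M \<rightarrow> worlds S ar N"
    by (auto simp: worlds_def is_world_def restr_world_def ahk_world_def)
  have pre: "(\<lambda>U. restr_world N (ahk_world S ar f U)) -` {w} \<inter> space ?M \<in> sets ?M"
    if w: "w \<in> worlds S ar N" for w
  proof -
    have eq: "(\<lambda>U. restr_world N (ahk_world S ar f U)) -` {w} \<inter> space ?M
        = {U \<in> space ?M. \<forall>t\<in>T. ahk_world S ar f U (fst t) (snd t) = w (fst t) (snd t)}"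
    proof (intro set_eqI iffI)
      fix U assume "U \<in> (\<lambda>U. restr_world N (ahk_world S ar f U)) -` {w} \<inter> space ?M"
      then show "U \<in> {U \<in> space ?M. \<forall>t\<in>T. ahk_world S ar f U (fst t) (snd t) = w (fst t) (snd t)}"
        by (auto simp: T_def restr_world_def)
    next
      fix U assume U: "U \<in> {U \<in> space ?M. \<forall>t\<in>T. ahk_world S ar f U (fst t) (snd t) = w (fst t) (snd t)}"
      have "restr_world N (ahk_world S ar f U) r xs = w r xs" for r xs
      proof (cases "(r, xs) \<in> T")
        case True
        then show ?thesis using U by (auto simp: T_def restr_world_def)
      next
        case False
        then show ?thesis using w
          by (auto simp: T_def restr_world_def ahk_world_def worlds_def is_world_def)
      qed
      then show "U \<in> (\<lambda>U. restr_world N (ahk_world S ar f U)) -` {w} \<inter> space ?M"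
        using U by (auto simp: fun_eq_iff)
    qed
    have each: "{U \<in> space ?M. ahk_world S ar f U (fst t) (snd t) = w (fst t) (snd t)} \<in> sets ?M"
      if t: "t \<in> T" for t
    proof -
      have m: "(\<lambda>U. ahk_world S ar f U (fst t) (snd t)) \<in> ?M \<rightarrow>\<^sub>M count_space UNIV"
        by (rule ahk_world_meas[OF AHK KS]) (use t in \<open>auto simp: T_def\<close>)
      have "{U \<in> space ?M. ahk_world S ar f U (fst t) (snd t) = w (fst t) (snd t)}
          = (\<lambda>U. ahk_world S ar f U (fst t) (snd t)) -` {w (fst t) (snd t)} \<inter> space ?M" by auto
      also have "\<dots> \<in> sets ?M" by (rule measurable_sets[OF m]) simp
      finally show ?thesis .
    qed
    show ?thesis unfolding eq
      by (rule sets.sets_Collect_finite_All[OF each finT])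
  qed
  show ?thesis
    using into pre by (subst measurable_count_space_eq_countable[OF countable_finite[OF worlds_finite[OF sig]]]) auto
qed



lemma prob_unit: "prob_space unit_interval"
  unfolding unit_interval_def
  by (rule prob_spaceI) (simp add: emeasure_restrict_space space_restrict_space)

theorem proposition3:
  fixes S :: "'r set" and ar :: "'r \<Rightarrow> nat"
    and f :: "nat \<Rightarrow> (nat set \<Rightarrow> real) \<Rightarrow> 'r world"
    and n :: nat and \<omega> :: "'r world"
  assumes "AHK_model S ar f"
    and "1 \<le> n"
    and "\<omega> \<in> worlds S ar n"
    and "measure (ahk_dist S ar f n) {\<omega>} > 0"
  shows "measure (ahk_dist S ar f (n + 1))
           {\<omega>' \<in> worlds S ar (n + 1). restr_world n \<omega>' = \<omega> \<and>
                                       sub_world ([1..<n] @ [n + 1]) \<omega>' = \<omega>}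
         \<ge> (measure (ahk_dist S ar f n) {\<omega>})\<^sup>2"
proof -
  note AHK = assms(1) and n1 = assms(2) and \<omega>w = assms(3)
  have sig: "signature S ar" using AHK by (simp add: AHK_model_def)
  define a where "a = arity_max S ar"
  define J where "J = {A :: nat set. finite A \<and> card A \<le> a}"
  define Q where "Q = PiM J (\<lambda>_. unit_interval)"
  have QU: "U_space a = Q" by (simp add: U_space_def Q_def J_def)
  define \<tau> where "\<tau> x = (if x = n then n + 1 else x)" for x :: nat
  define Kn where "Kn = {A. A \<subseteq> {1..n} \<and> card A \<le> a}"
  define K0 where "K0 = {A. A \<subseteq> {1..n - 1} \<and> card A \<le> a}"
  define K1 where "K1 = {A. A \<subseteq> {1..n} \<and> n \<in> A \<and> card A \<le> a}"
  define K2 where "K2 = (\<lambda>A. \<tau> ` A) ` K1"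
  define g where "g x = (restr_world n (ahk_world S ar f x) = \<omega>)" for x
  have nm: "{1..n - 1} = {1..n} - {n}" using n1 by auto
  have K0': "K0 = {A. A \<subseteq> {1..n} \<and> n \<notin> A \<and> card A \<le> a}" unfolding K0_def nm by blast
  have KK: "K0 \<union> K1 = Kn" unfolding K0' K1_def Kn_def by blast
  have KnS: "{A. A \<subseteq> {1..n} \<and> card A \<le> arity_max S ar} \<subseteq> Kn" by (simp add: Kn_def a_def)
  have JS: "{A. A \<subseteq> {1..N} \<and> card A \<le> arity_max S ar} \<subseteq> J" for N
    by (auto simp: J_def a_def intro: finite_subset)
  have gm: "g \<in> PiM (K0 \<union> K1) (\<lambda>_. unit_interval) \<rightarrow>\<^sub>M count_space UNIV"
  proof -
    have "g = (\<lambda>w. w = \<omega>) \<circ> (\<lambda>U. restr_world n (ahk_world S ar f U))" by (simp add: g_def fun_eq_iff)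
    then show ?thesis unfolding KK
      using measurable_comp[OF restr_meas[OF AHK KnS] measurable_count_space] by simp
  qed
  have injt: "inj_on \<tau> {1..n}" by (auto simp: inj_on_def \<tau>_def)
  have smt: "strict_mono_on {1..n} \<tau>" by (auto simp: strict_mono_on_def \<tau>_def)
  have bij: "bij_betw (\<lambda>A. \<tau> ` A) K1 K2"
    unfolding bij_betw_def K2_def
    by (auto simp: inj_on_def K1_def inj_on_image_eq_iff[OF injt])
  have sK0: "\<tau> ` A = A" if "A \<in> K0" for A
  proof -
    have "n \<notin> A" using that by (simp add: K0')
    then show ?thesis by (auto simp: \<tau>_def image_iff)
  qed
  have finK: "finite K0" "finite K1" "finite K2"
  proof -
    show "finite K0" by (rule finite_subset[of _ "Pow {1..n - 1}"]) (auto simp: K0_def)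
    show f1: "finite K1" by (rule finite_subset[of _ "Pow {1..n}"]) (auto simp: K1_def)
    show "finite K2" unfolding K2_def using f1 by simp
  qed
  have K2n: "n + 1 \<in> B" if "B \<in> K2" for B using that by (auto simp: K2_def K1_def \<tau>_def)
  have dis: "K0 \<inter> K1 = {}" "K0 \<inter> K2 = {}" "K1 \<inter> K2 = {}"
    using K2n by (auto simp: K0' K1_def subset_iff) fastforce+
  have sub: "K0 \<union> K1 \<union> K2 \<subseteq> J"
  proof -
    have "K0 \<union> K1 \<subseteq> J" unfolding KK Kn_def J_def by (auto intro: finite_subset)
    moreover have "K2 \<subseteq> J"
    proof
      fix B assume "B \<in> K2"
      then obtain A where A: "A \<in> K1" "B = \<tau> ` A" by (auto simp: K2_def)
      have "finite A" using A(1) by (auto simp: K1_def intro: finite_subset)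
      moreover have "card B \<le> card A" using A(2) card_image_le[OF \<open>finite A\<close>] by simp
      ultimately show "B \<in> J" using A by (auto simp: J_def K1_def)
    qed
    ultimately show ?thesis by blast
  qed
  note AI = abstract_ineq[OF prob_unit sub finK dis sK0 bij gm]
  have cardA: "A \<in> Kn" if "r \<in> S" "length xs = ar r" "A \<subseteq> set xs" "set xs \<subseteq> {1..n}" for r xs A
  proof -
    have "card A \<le> card (set xs)" using that(3) by (intro card_mono) auto
    also have "\<dots> \<le> length xs" by (rule card_length)
    also have "\<dots> \<le> a" using that(1,2) ar_le_max[OF sig] by (simp add: a_def)
    finally show ?thesis using that(3,4) by (auto simp: Kn_def)
  qed
  have loc: "restr_world n (ahk_world S ar f U) = restr_world n (ahk_world S ar f (restrict U Kn))" for U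
  proof -
    have "ahk_world S ar f U r xs = ahk_world S ar f (restrict U Kn) r xs" if "set xs \<subseteq> {1..n}" for r xs
      by (rule ahk_world_cong) (use cardA that in auto)
    then show ?thesis by (auto simp: restr_world_def fun_eq_iff)
  qed
  have isn: "([1..<n] @ [n + 1]) ! (h - 1) = \<tau> h" if "h \<in> {1..n}" for h
  proof (cases "h = n")
    case True
    then show ?thesis using n1 by (simp add: nth_append \<tau>_def)
  next
    case False
    then have "h - 1 < n - 1" using that by auto
    then show ?thesis using that False by (simp add: nth_append \<tau>_def)
  qed
  have rel: "sub_world ([1..<n] @ [n + 1]) (restr_world (n + 1) (ahk_world S ar f U))
      = restr_world n (ahk_world S ar f (\<lambda>A\<in>Kn. U (\<tau> ` A)))" for U
  proof -
    have "sub_world ([1..<n] @ [n + 1]) (restr_world (n + 1) (ahk_world S ar f U)) r xs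
        = restr_world n (ahk_world S ar f (\<lambda>A\<in>Kn. U (\<tau> ` A))) r xs" for r xs
    proof (cases "set xs \<subseteq> {1..n}")
      case False
      have len: "length ([1..<n] @ [n + 1]) = n" using n1 by simp
      show ?thesis using False unfolding sub_world_def restr_world_def len by simp
    next
      case True
      have mp: "map (\<lambda>h. ([1..<n] @ [n + 1]) ! (h - 1)) xs = map \<tau> xs"
        using True isn by (auto intro!: map_cong)
      have st: "set (map \<tau> xs) \<subseteq> {1..n + 1}" using True by (auto simp: \<tau>_def)
      have "ahk_world S ar f U r (map \<tau> xs) = ahk_world S ar f (\<lambda>A\<in>Kn. U (\<tau> ` A)) r xs"
        by (rule ahk_world_relabel[OF smt True]) (use cardA True in auto)
      moreover have len: "length ([1..<n] @ [n + 1]) = n" using n1 by simp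
      ultimately show ?thesis using True st
        unfolding sub_world_def restr_world_def len mp by simp
    qed
    then show ?thesis by (simp add: fun_eq_iff)
  qed
  have mJ: "(\<lambda>U. restr_world N (ahk_world S ar f U)) \<in> Q \<rightarrow>\<^sub>M count_space (worlds S ar N)" for N
    unfolding Q_def by (rule restr_meas[OF AHK JS])
  have rr: "restr_world n (restr_world (n + 1) w) = restr_world n w" for w :: "'r world"
    by (auto simp: restr_world_def fun_eq_iff)
  have inw: "restr_world (n + 1) (ahk_world S ar f U) \<in> worlds S ar (n + 1)" for U
    by (auto simp: worlds_def is_world_def restr_world_def ahk_world_def)
  have p_eq: "measure (ahk_dist S ar f n) {\<omega>} = measure Q {x \<in> space Q. g (restrict x (K0 \<union> K1))}"
  proof -
    have "measure (ahk_dist S ar f n) {\<omega>} = measure Q ((\<lambda>U. restr_world n (ahk_world S ar f U)) -` {\<omega>} \<inter> space Q)"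
      unfolding ahk_dist_def a_def[symmetric] QU by (rule measure_distr[OF mJ]) (simp add: \<omega>w)
    also have "(\<lambda>U. restr_world n (ahk_world S ar f U)) -` {\<omega>} \<inter> space Q = {x \<in> space Q. g (restrict x (K0 \<union> K1))}"
      unfolding KK g_def using loc by auto
    finally show ?thesis .
  qed
  have O_eq: "measure (ahk_dist S ar f (n + 1))
           {\<omega>' \<in> worlds S ar (n + 1). restr_world n \<omega>' = \<omega> \<and> sub_world ([1..<n] @ [n + 1]) \<omega>' = \<omega>}
      = measure Q {x \<in> space Q. g (restrict x (K0 \<union> K1)) \<and> g (\<lambda>i\<in>K0 \<union> K1. x (\<tau> ` i))}"
  proof -
    have "measure (ahk_dist S ar f (n + 1))
           {\<omega>' \<in> worlds S ar (n + 1). restr_world n \<omega>' = \<omega> \<and> sub_world ([1..<n] @ [n + 1]) \<omega>' = \<omega>}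
        = measure Q ((\<lambda>U. restr_world (n + 1) (ahk_world S ar f U)) -`
           {\<omega>' \<in> worlds S ar (n + 1). restr_world n \<omega>' = \<omega> \<and> sub_world ([1..<n] @ [n + 1]) \<omega>' = \<omega>} \<inter> space Q)"
      unfolding ahk_dist_def a_def[symmetric] QU by (rule measure_distr[OF mJ]) auto
    also have "(\<lambda>U. restr_world (n + 1) (ahk_world S ar f U)) -`
           {\<omega>' \<in> worlds S ar (n + 1). restr_world n \<omega>' = \<omega> \<and> sub_world ([1..<n] @ [n + 1]) \<omega>' = \<omega>} \<inter> space Q
        = {x \<in> space Q. g (restrict x (K0 \<union> K1)) \<and> g (\<lambda>i\<in>K0 \<union> K1. x (\<tau> ` i))}"
      unfolding KK g_def using loc rel inw rr by auto
    finally show ?thesis .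
  qed
  show ?thesis unfolding O_eq p_eq using AI unfolding Q_def J_def by simp
qed

end
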